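(* Let $g$ be a semi-consistent piece-wise quadratic function with breakpoints $-\infty=\tau_0<\tau_1<\dots<\tau_N=+\infty$ and pieces $p_1,\dots,p_N$. For any $1\le k<l\le N$, the pieces $k$ and $l$ have at most one feasible common tangent.
   Context: A continuous $g$ is piece-wise quadratic with $N$ pieces if $g=p_k$ on $[\tau_{k-1},\tau_k]$ for quadratic $p_k$ with $p_k\ne p_{k+1}$. Indexing function of piece-wise quadratic $h$ with strongly convex pieces: $I_h(\beta)=\min\{k:\exists\,\alpha^\star\in\arg\max_\alpha\{\beta\alpha-h(\alpha)\},\ \tau_{k-1}\le\alpha^\star\le\tau_k\}$. $g$ is semi-consistent if: (i) all $p_k$ are strongly convex; (ii) $p_k(\alpha)\le\min\{p_{k-1}(\alpha),p_{k+1}(\alpha)\}$ for $\alpha\in[\tau_{k-1},\tau_k]$, $2\le k\le N-1$; (iii) for every $k\le N$, $I_{g_k}$ is non-decreasing, where $g_k=g$ on $(-\infty,\tau_k]$ and $g_k=p_k$ on $(\tau_k,\infty)$. For $1\le k<l\le N$, a feasible common tangent to pieces $k$ and $l$ is a slope $s\in\mathbb{R}$ such that some line $\ell(\alpha)=s\alpha+b$ is tangent to $p_k$ at some $\alpha_k\in[\tau_{k-1},\tau_k]$ and tangent to $p_l$ at some $\alpha_l\in[\tau_{l-1},\tau_l]$ (i.e. $\ell(\alpha_k)=p_k(\alpha_k)$, $p_k'(\alpha_k)=s$, $\ell(\alpha_l)=p_l(\alpha_l)$, $p_l'(\alpha_l)=s$). *)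

theory Defs
  imports "HOL-Analysis.Analysis" "HOL-Library.Extended_Real"
begin

definition quadratic :: "(real \<Rightarrow> real) \<Rightarrow> bool" where
  "quadratic f \<longleftrightarrow> (\<exists>a b c. \<forall>x. f x = a * x\<^sup>2 + b * x + c)"

definition strongly_convex :: "(real \<Rightarrow> real) \<Rightarrow> bool" where
  "strongly_convex f \<longleftrightarrow> (\<exists>m>0. convex_on UNIV (\<lambda>x. f x - m / 2 * x\<^sup>2))"

definition in_piece :: "(nat \<Rightarrow> ereal) \<Rightarrow> nat \<Rightarrow> real \<Rightarrow> bool" where
  "in_piece tau k x \<longleftrightarrow> tau (k - 1) \<le> ereal x \<and> ereal x \<le> tau k"

definition pw_quadratic ::
  "(real \<Rightarrow> real) \<Rightarrow> nat \<Rightarrow> (nat \<Rightarrow> ereal) \<Rightarrow> (nat \<Rightarrow> real \<Rightarrow> real) \<Rightarrow> bool" where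
  "pw_quadratic g N tau p \<longleftrightarrow>
     N \<ge> 1 \<and> continuous_on UNIV g \<and>
     tau 0 = -\<infinity> \<and> tau N = \<infinity> \<and> (\<forall>k<N. tau k < tau (Suc k)) \<and>
     (\<forall>k\<in>{1..N}. quadratic (p k)) \<and>
     (\<forall>k\<in>{1..N}. \<forall>x. in_piece tau k x \<longrightarrow> g x = p k x) \<and>
     (\<forall>k. 1 \<le> k \<and> k < N \<longrightarrow> p k \<noteq> p (Suc k))"

definition index_fun ::
  "(real \<Rightarrow> real) \<Rightarrow> nat \<Rightarrow> (nat \<Rightarrow> ereal) \<Rightarrow> real \<Rightarrow> nat" where
  "index_fun h M tau \<beta> = (LEAST k. 1 \<le> k \<and> k \<le> M \<and>
      (\<exists>a. (\<forall>x. \<beta> * x - h x \<le> \<beta> * a - h a) \<and> in_piece tau k a))"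

text \<open>g_k: equal to g on (-inf, tau k] and to p k on (tau k, inf); it is piecewise
  quadratic with pieces p 1..p k and breakpoints tau 0, ..., tau (k-1), +inf.\<close>
definition trunc_fun ::
  "(real \<Rightarrow> real) \<Rightarrow> (nat \<Rightarrow> ereal) \<Rightarrow> (nat \<Rightarrow> real \<Rightarrow> real) \<Rightarrow> nat \<Rightarrow> real \<Rightarrow> real" where
  "trunc_fun g tau p k x = (if ereal x \<le> tau k then g x else p k x)"

definition semi_consistent ::
  "(real \<Rightarrow> real) \<Rightarrow> nat \<Rightarrow> (nat \<Rightarrow> ereal) \<Rightarrow> (nat \<Rightarrow> real \<Rightarrow> real) \<Rightarrow> bool" where
  "semi_consistent g N tau p \<longleftrightarrow>
     pw_quadratic g N tau p \<and>
     (\<forall>k\<in>{1..N}. strongly_convex (p k)) \<and>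
     (\<forall>k. 2 \<le> k \<and> k \<le> N - 1 \<longrightarrow>
        (\<forall>x. in_piece tau k x \<longrightarrow> p k x \<le> min (p (k - 1) x) (p (Suc k) x))) \<and>
     (\<forall>k\<in>{1..N}. mono (index_fun (trunc_fun g tau p k) k (tau(k := \<infinity>))))"

definition feasible_common_tangent ::
  "(nat \<Rightarrow> ereal) \<Rightarrow> (nat \<Rightarrow> real \<Rightarrow> real) \<Rightarrow> nat \<Rightarrow> nat \<Rightarrow> real \<Rightarrow> bool" where
  "feasible_common_tangent tau p k l s \<longleftrightarrow>
     (\<exists>b ak al. in_piece tau k ak \<and> in_piece tau l al \<and>
        s * ak + b = p k ak \<and> deriv (p k) ak = s \<and>
        s * al + b = p l al \<and> deriv (p l) al = s)"

end

theory Submission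
  imports Defs
begin

lemma quad_deriv:
  fixes f :: "real \<Rightarrow> real"
  assumes "\<forall>x. f x = a * x\<^sup>2 + b * x + c"
  shows "deriv f x = 2 * a * x + b"
proof -
  have f: "f = (\<lambda>x. a * x\<^sup>2 + b * x + c)" using assms by auto
  have "((\<lambda>x. a * x\<^sup>2 + b * x + c) has_real_derivative (a * (2 * x) + b)) (at x)"
    by (auto intro!: derivative_eq_intros)
  then show ?thesis unfolding f by (simp add: DERIV_imp_deriv algebra_simps)
qed

lemma alg:
  fixes A B C A' B' C' s1 s2 a1 a2 b1 b2 c1 c2 :: real
  assumes "s1 = 2*A*a1 + B" "s1*a1 + c1 = A*a1\<^sup>2 + B*a1 + C"
    "s2 = 2*A*a2 + B" "s2*a2 + c2 = A*a2\<^sup>2 + B*a2 + C"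
    "s1 = 2*A'*b1 + B'" "s1*b1 + c1 = A'*b1\<^sup>2 + B'*b1 + C'"
    "s2 = 2*A'*b2 + B'" "s2*b2 + c2 = A'*b2\<^sup>2 + B'*b2 + C'"
    "s1 \<noteq> s2"
  shows "a1 + a2 = b1 + b2"
proof -
  have c1: "c1 = C - A*a1*a1" using assms(1,2) by (simp add: algebra_simps power2_eq_square)
  have c2: "c2 = C - A*a2*a2" using assms(3,4) by (simp add: algebra_simps power2_eq_square)
  have c1': "c1 = C' - A'*b1*b1" using assms(5,6) by (simp add: algebra_simps power2_eq_square)
  have c2': "c2 = C' - A'*b2*b2" using assms(7,8) by (simp add: algebra_simps power2_eq_square)
  have e1: "A*a2*a2 - A*a1*a1 = A'*b2*b2 - A'*b1*b1" using c1 c2 c1' c2' by linarith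
  have e2: "A*(a2-a1) = A'*(b2-b1)" using assms(1,3,5,7) by (simp add: algebra_simps)
  have e3: "A*(a2-a1)*(a2+a1) = A'*(b2-b1)*(b2+b1)" using e1 by (simp add: algebra_simps)
  have nz: "A*(a2-a1) \<noteq> 0" using assms(1,3,9) by (simp add: algebra_simps)
  have "A*(a2-a1)*(a2+a1) = A*(a2-a1)*(b2+b1)" using e2 e3 by simp
  then have "a2 + a1 = b2 + b1" using nz by simp
  then show ?thesis by simp
qed

lemma tau_mono:
  assumes "\<forall>k<N. tau k < tau (Suc k)" "i \<le> j" "j \<le> N"
  shows "tau i \<le> (tau j :: ereal)"
  using assms(2,3)
proof (induction j rule: dec_induct)
  case base then show ?case by simp
next
  case (step n)
  then have "tau n < tau (Suc n)" using assms(1) by simp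
  with step show ?case by simp
qed

theorem lemma9:
  fixes g :: "real \<Rightarrow> real" and N :: nat and tau :: "nat \<Rightarrow> ereal"
    and p :: "nat \<Rightarrow> real \<Rightarrow> real" and k l :: nat
  assumes "semi_consistent g N tau p"
    and "1 \<le> k" and "k < l" and "l \<le> N"
  shows "\<forall>s1 s2. feasible_common_tangent tau p k l s1 \<and> feasible_common_tangent tau p k l s2
           \<longrightarrow> s1 = s2"
proof (intro allI impI)
  fix s1 s2
  assume h: "feasible_common_tangent tau p k l s1 \<and> feasible_common_tangent tau p k l s2"
  have pw: "pw_quadratic g N tau p" using assms(1) unfolding semi_consistent_def by simp
  then have qk: "quadratic (p k)" and ql: "quadratic (p l)"
    and tm: "\<forall>k<N. tau k < tau (Suc k)"
    using assms unfolding pw_quadratic_def by auto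
  obtain A B C where P: "\<forall>x. p k x = A * x\<^sup>2 + B * x + C" using qk unfolding quadratic_def by blast
  obtain A' B' C' where Q: "\<forall>x. p l x = A' * x\<^sup>2 + B' * x + C'" using ql unfolding quadratic_def by blast
  obtain c1 a1 b1 where t1: "in_piece tau k a1" "in_piece tau l b1"
    "s1 * a1 + c1 = p k a1" "deriv (p k) a1 = s1" "s1 * b1 + c1 = p l b1" "deriv (p l) b1 = s1"
    using h unfolding feasible_common_tangent_def by blast
  obtain c2 a2 b2 where t2: "in_piece tau k a2" "in_piece tau l b2"
    "s2 * a2 + c2 = p k a2" "deriv (p k) a2 = s2" "s2 * b2 + c2 = p l b2" "deriv (p l) b2 = s2"
    using h unfolding feasible_common_tangent_def by blast
  have kl: "tau k \<le> tau (l - 1)" using tau_mono[OF tm, of k "l - 1"] assms by simp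
  have r1: "ereal a1 \<le> tau k" "tau (l - 1) \<le> ereal b1" using t1 unfolding in_piece_def by auto
  have r2: "ereal a2 \<le> tau k" "tau (l - 1) \<le> ereal b2" using t2 unfolding in_piece_def by auto
  have ab1: "a1 \<le> b1" using r1 kl order_trans by (metis ereal_less_eq(3))
  have ab2: "a2 \<le> b2" using r2 kl order_trans by (metis ereal_less_eq(3))
  show "s1 = s2"
  proof (rule ccontr)
    assume ne: "s1 \<noteq> s2"
    have "a1 + a2 = b1 + b2"
      apply (rule alg[of s1 A a1 B c1 C s2 a2 c2 A' b1 B' C' b2])
      using t1 t2 P Q quad_deriv[OF P] quad_deriv[OF Q] ne by auto
    then have "a1 = b1" "a2 = b2" using ab1 ab2 by auto
    then have "tau k = ereal a1" "tau k = ereal a2" using r1 r2 kl by (metis order_antisym order_trans)+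
    then have "a1 = a2" by simp
    then show False using ne t1(4) t2(4) by simp
  qed
qed

end
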